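(* Let $d\ge1$, let $D\subset\mathbb{R}^d$ be Lebesgue measurable with $Leb(Conv(D))<\infty$, and let $f:D\to\mathbb{R}$ be bounded. Then the functions $$G_1(r):=\int_D\sup_{y\in B_r(x)\cap D}f(y)\,\mathrm{d}\mu(x),\quad G_2(r):=\int_D\inf_{y\in B_r(x)\cap D}f(y)\,\mathrm{d}\mu(x),\quad I(r):=\int_D (osc_r f)\,\mathrm{d}\mu$$ are continuous at every $r>0$.
   Context: $Conv(D)$ is the convex hull of $D$, $B_r(x)=\{y:|y-x|<r\}$ is the open Euclidean ball, $\mu=c\cdot Leb$ for a fixed constant $c>0$ with $Leb$ Lebesgue measure, and $(osc_r f)(x):=\sup_{y\in B_r(x)\cap D}f(y)-\inf_{y\in B_r(x)\cap D}f(y)$. *)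

theory Defs
  imports "HOL-Analysis.Analysis"
begin

definition mu :: "real \<Rightarrow> 'a::euclidean_space measure" where
  "mu c = scale_measure (ennreal c) lebesgue"

definition locsup :: "'a::euclidean_space set \<Rightarrow> ('a \<Rightarrow> real) \<Rightarrow> real \<Rightarrow> 'a \<Rightarrow> real" where
  "locsup D f r x = (SUP y \<in> ball x r \<inter> D. f y)"

definition locinf :: "'a::euclidean_space set \<Rightarrow> ('a \<Rightarrow> real) \<Rightarrow> real \<Rightarrow> 'a \<Rightarrow> real" where
  "locinf D f r x = (INF y \<in> ball x r \<inter> D. f y)"

definition osc :: "'a::euclidean_space set \<Rightarrow> ('a \<Rightarrow> real) \<Rightarrow> real \<Rightarrow> 'a \<Rightarrow> real" where
  "osc D f r x = locsup D f r x - locinf D f r x"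

end

theory Submission
  imports Defs
begin

lemma some_negligible:
  fixes A :: "real \<Rightarrow> 'a::euclidean_space set"
  assumes unc: "uncountable I" and meas: "\<And>i. i\<in>I \<Longrightarrow> A i \<in> lmeasurable"
    and sub: "\<And>i. i\<in>I \<Longrightarrow> A i \<subseteq> W" and W: "W \<in> lmeasurable"
    and disj: "disjoint_family_on A I"
  shows "\<exists>i\<in>I. negligible (A i)"
proof (rule ccontr)
  assume "\<not> ?thesis"
  then have pos: "\<And>i. i\<in>I \<Longrightarrow> measure lebesgue (A i) > 0"
    using meas negligible_iff_measure0 measure_nonneg by (metis less_eq_real_def)
  define J where "J n = {i\<in>I. measure lebesgue (A i) > 1 / Suc n}" for n :: nat
  have fin: "finite (J n)" for n
  proof (rule ccontr)
    assume inf: "infinite (J n)"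
    obtain N :: nat where N: "N > measure lebesgue W * Suc n" using reals_Archimedean2 by blast
    obtain F where F: "F \<subseteq> J n" "finite F" "card F = N"
      using infinite_arbitrarily_large[OF inf] by blast
    have "measure lebesgue (\<Union>i\<in>F. A i) = (\<Sum>i\<in>F. measure lebesgue (A i))"
    proof (rule measure_finite_Union)
      have FI: "F \<subseteq> I" using F unfolding J_def by auto
      show "finite F" by fact
      show "A ` F \<subseteq> sets lebesgue" using FI meas by (auto simp: fmeasurable_def)
      show "disjoint_family_on A F" using FI disj by (meson disjoint_family_on_mono)
      show "emeasure lebesgue (A i) \<noteq> \<infinity>" if "i \<in> F" for i
        using FI meas[of i] that by (auto simp: fmeasurable_def)
    qed
    also have "\<dots> \<ge> (\<Sum>i\<in>F. 1 / Suc n)"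
      apply (rule sum_mono) using F unfolding J_def by auto
    finally have "measure lebesgue (\<Union>i\<in>F. A i) \<ge> N / Suc n" using F by simp
    moreover have "measure lebesgue (\<Union>i\<in>F. A i) \<le> measure lebesgue W"
    proof (rule measure_mono_fmeasurable)
      show "(\<Union>i\<in>F. A i) \<subseteq> W" using F sub unfolding J_def by blast
      show "(\<Union>i\<in>F. A i) \<in> sets lebesgue"
        using F meas unfolding J_def by (intro sets.finite_UN) (auto simp: fmeasurable_def)
    qed (rule W)
    ultimately have "N / Suc n \<le> measure lebesgue W" by simp
    then have "N \<le> measure lebesgue W * Suc n" by (simp add: field_simps)
    with N show False by simp
  qed
  have "I = (\<Union>n. J n)"
  proof
    show "I \<subseteq> (\<Union>n. J n)"
    proof
      fix i assume i: "i \<in> I"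
      obtain n :: nat where "1 / Suc n < measure lebesgue (A i)"
        using pos[OF i] by (metis nat_approx_posE)
      then show "i \<in> (\<Union>n. J n)" using i unfolding J_def by auto
    qed
  qed (auto simp: J_def)
  then have "countable I" using fin by (simp add: countable_finite)
  with unc show False by simp
qed

lemma lip_ineq:
  fixes x y a b :: "'a::euclidean_space"
  assumes s: "1/8 \<le> s" "s \<le> 1/4"
    and xa: "norm (x - a) = r" and yb: "norm (y - b) = r"
    and xb: "norm (x - b) \<ge> r" and ya: "norm (y - a) \<ge> r"
  shows "norm (x - y) \<le> 12 * norm ((a + s *\<^sub>R (x - a)) - (b + s *\<^sub>R (y - b)))"
proof -
  define X where "X = x - a"
  define Y where "Y = y - b"
  define d where "d = b - a"
  define Dl where "Dl = X - Y"
  have r0: "r \<ge> 0" using xa by auto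
  have xb': "norm (X - d) \<ge> r" using xb by (simp add: X_def d_def)
  have ya': "norm (Y + d) \<ge> r" using ya by (simp add: Y_def d_def algebra_simps)
  have "(norm (X - d))^2 \<ge> r^2" using xb' r0 by (simp add: power_mono)
  then have h1: "X \<bullet> X - 2 * (X \<bullet> d) + d \<bullet> d \<ge> r^2"
    by (simp add: power2_norm_eq_inner inner_diff_left inner_diff_right inner_commute)
  have "(norm (Y + d))^2 \<ge> r^2" using ya' r0 by (simp add: power_mono)
  then have h2: "Y \<bullet> Y + 2 * (Y \<bullet> d) + d \<bullet> d \<ge> r^2"
    by (simp add: power2_norm_eq_inner inner_add_left inner_add_right inner_commute)
  have hX: "X \<bullet> X = r^2" using xa by (simp add: X_def power2_norm_eq_inner[symmetric])
  have hY: "Y \<bullet> Y = r^2" using yb by (simp add: Y_def power2_norm_eq_inner[symmetric])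
  have C: "d \<bullet> Dl \<le> d \<bullet> d"
    using h1 h2 hX hY by (simp add: Dl_def inner_diff_right inner_commute)
  have CS: "2 * \<bar>d \<bullet> Dl\<bar> \<le> d \<bullet> d + Dl \<bullet> Dl"
  proof -
    have "0 \<le> (d - Dl) \<bullet> (d - Dl)" "0 \<le> (d + Dl) \<bullet> (d + Dl)" by simp_all
    then show ?thesis
      by (simp add: inner_diff_left inner_diff_right inner_add_left inner_add_right inner_commute abs_le_iff)
  qed
  have exy: "x - y = Dl - d" by (simp add: Dl_def X_def Y_def d_def)
  have ephi: "(a + s *\<^sub>R (x - a)) - (b + s *\<^sub>R (y - b)) = s *\<^sub>R Dl - d"
    by (simp add: Dl_def X_def Y_def d_def algebra_simps)
  have L: "(norm (x - y))^2 = Dl \<bullet> Dl - 2 * (d \<bullet> Dl) + d \<bullet> d"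
    by (simp add: exy power2_norm_eq_inner inner_diff_left inner_diff_right inner_commute)
  have R: "(norm (s *\<^sub>R Dl - d))^2 = s^2 * (Dl \<bullet> Dl) - 2 * s * (d \<bullet> Dl) + d \<bullet> d"
    unfolding power2_norm_eq_inner by (simp add: inner_diff_left inner_diff_right inner_commute power2_eq_square)
  have DD: "Dl \<bullet> Dl \<ge> 0" "d \<bullet> d \<ge> 0" by simp_all
  have "s^2 * (Dl \<bullet> Dl) \<ge> (1/64) * (Dl \<bullet> Dl)"
  proof (intro mult_right_mono DD)
    have "(1/8)*(1/8) \<le> s * s" using s by (intro mult_mono) auto
    then show "1/64 \<le> s^2" by (simp add: power2_eq_square)
  qed
  moreover have "2 * s * (d \<bullet> Dl) \<le> 2 * s * (d \<bullet> d)" using C s by simp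
  ultimately have "(norm (s *\<^sub>R Dl - d))^2 \<ge> (1/64) * (Dl \<bullet> Dl) + (1 - 2 * s) * (d \<bullet> d)"
    unfolding R by (simp add: algebra_simps)
  moreover have "(1 - 2 * s) * (d \<bullet> d) \<ge> (1/2) * (d \<bullet> d)" using s DD by (intro mult_right_mono) auto
  ultimately have "(norm (s *\<^sub>R Dl - d))^2 \<ge> (1/64) * (Dl \<bullet> Dl) + (1/2) * (d \<bullet> d)" by linarith
  moreover have "(norm (x - y))^2 \<le> 2 * (Dl \<bullet> Dl) + 2 * (d \<bullet> d)" using L CS by linarith
  ultimately have "(norm (x - y))^2 \<le> (12 * norm (s *\<^sub>R Dl - d))^2"
    using DD by (simp add: power_mult_distrib) (use DD in linarith)
  then show ?thesis unfolding ephi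
    by (rule power2_le_imp_le) simp
qed

lemma level_negligible_closed:
  fixes V :: "'a::euclidean_space set"
  assumes V: "closed V" "V \<noteq> {}" and r: "r > 0"
  shows "negligible {x. infdist x V = r}"
proof -
  define S where "S \<rho> = {x. infdist x V = \<rho>}" for \<rho>
  have closedS: "closed (S \<rho>)" for \<rho>
    unfolding S_def by (intro closed_Collect_eq continuous_intros)
  define u where "u x = (SOME a. a \<in> V \<and> infdist x V = dist x a)" for x
  have u: "u x \<in> V \<and> infdist x V = dist x (u x)" for x
  proof -
    obtain a where "a \<in> V" "infdist x V = dist x a" using infdist_attains_inf[OF V] by blast
    then show ?thesis unfolding u_def by (rule someI[where x=a, OF conjI])
  qed
  have negn: "negligible (S r \<inter> cball 0 (real n))" for n :: nat
  proof -
    define W where "W = cball (0::'a) (real n + r)"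
    have "\<exists>s\<in>{1/8..1/4::real}. negligible (S (s*r) \<inter> W)"
    proof (rule some_negligible[where W = W])
      show "uncountable {1/8..1/4::real}" by (simp add: uncountable_closed_interval)
      show "S (s * r) \<inter> W \<in> lmeasurable" for s
        unfolding W_def by (intro lmeasurable_compact closed_Int_compact closedS compact_cball)
      show "S (s * r) \<inter> W \<subseteq> W" for s by auto
      show "W \<in> lmeasurable" unfolding W_def by simp
      show "disjoint_family_on (\<lambda>s. S (s * r) \<inter> W) {1/8..1/4}"
        unfolding disjoint_family_on_def S_def using r by auto
    qed
    then obtain s where s: "1/8 \<le> s" "s \<le> 1/4" and negs: "negligible (S (s*r) \<inter> W)" by auto
    define \<phi> where "\<phi> x = u x + s *\<^sub>R (x - u x)" for x
    define K where "K = S r \<inter> cball 0 (real n)"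
    have dxu: "norm (x - u x) = r" if "x \<in> K" for x
      using that u[of x] by (simp add: K_def S_def dist_norm)
    have phiS: "\<phi> x \<in> S (s*r) \<inter> W" if x: "x \<in> K" for x
    proof -
      have e1: "\<phi> x - u x = s *\<^sub>R (x - u x)" by (simp add: \<phi>_def)
      have e2: "x - \<phi> x = (1 - s) *\<^sub>R (x - u x)" by (simp add: \<phi>_def algebra_simps)
      have n1: "dist (\<phi> x) (u x) = s * r" using e1 dxu[OF x] s by (simp add: dist_norm)
      have n2: "dist x (\<phi> x) = (1 - s) * r" using e2 dxu[OF x] s by (simp add: dist_norm)
      have "infdist (\<phi> x) V \<le> s * r" using infdist_le[of "u x" V "\<phi> x"] u[of x] n1 by simp
      moreover have "infdist x V \<le> infdist (\<phi> x) V + dist x (\<phi> x)" by (rule infdist_triangle)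
      moreover have "infdist x V = r" using x by (simp add: K_def S_def)
      ultimately have "infdist (\<phi> x) V = s * r" using n2 by (simp add: algebra_simps)
      moreover have "norm (\<phi> x) \<le> real n + r"
      proof -
        have "norm (\<phi> x) \<le> norm x + dist x (\<phi> x)"
          by (metis dist_norm norm_triangle_sub add.commute norm_minus_commute)
        also have "\<dots> \<le> real n + r"
        proof -
          have "s * r \<ge> 0" using s r by simp
          then have "(1 - s) * r \<le> r" by (simp add: algebra_simps)
          moreover have "norm x \<le> real n" using x by (simp add: K_def)
          ultimately show ?thesis using n2 by simp
        qed
        finally show ?thesis .
      qed
      ultimately show ?thesis by (simp add: S_def W_def)
    qed
    have lip: "norm (x - y) \<le> 12 * norm (\<phi> x - \<phi> y)" if x: "x \<in> K" and y: "y \<in> K" for x y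
    proof -
      have ix: "infdist x V = r" and iy: "infdist y V = r" using x y by (auto simp: K_def S_def)
      have "r \<le> dist x (u y)" using infdist_le[of "u y" V x] u[of y] ix by simp
      then have xb: "norm (x - u y) \<ge> r" by (simp add: dist_norm)
      have "r \<le> dist y (u x)" using infdist_le[of "u x" V y] u[of x] iy by simp
      then have ya: "norm (y - u x) \<ge> r" by (simp add: dist_norm)
      show ?thesis unfolding \<phi>_def
        by (rule lip_ineq[OF s dxu[OF x] dxu[OF y] xb ya])
    qed
    have inj: "inj_on \<phi> K"
    proof (rule inj_onI)
      fix x y assume "x \<in> K" "y \<in> K" "\<phi> x = \<phi> y"
      then show "x = y" using lip[of x y] by simp
    qed
    have negT: "negligible (\<phi> ` K)"
      using negs phiS by (blast intro: negligible_subset)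
    have "negligible (inv_into K \<phi> ` (\<phi> ` K))"
    proof (rule negligible_locally_Lipschitz_image)
      show "DIM('a) \<le> DIM('a)" by simp
      show "negligible (\<phi> ` K)" by (rule negT)
      fix p assume "p \<in> \<phi> ` K"
      then obtain x where x: "x \<in> K" and p: "p = \<phi> x" by auto
      show "\<exists>T B. open T \<and> p \<in> T \<and>
              (\<forall>q \<in> \<phi> ` K \<inter> T. norm (inv_into K \<phi> q - inv_into K \<phi> p) \<le> B * norm (q - p))"
      proof (intro exI conjI)
        show "open (UNIV :: 'a set)" by simp
        show "p \<in> UNIV" by simp
        show "\<forall>q \<in> \<phi> ` K \<inter> UNIV. norm (inv_into K \<phi> q - inv_into K \<phi> p) \<le> 12 * norm (q - p)"
        proof
          fix q assume "q \<in> \<phi> ` K \<inter> UNIV"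
          then obtain y where y: "y \<in> K" and q: "q = \<phi> y" by auto
          show "norm (inv_into K \<phi> q - inv_into K \<phi> p) \<le> 12 * norm (q - p)"
            using lip[OF y x] inv_into_f_f[OF inj x] inv_into_f_f[OF inj y] p q by simp
        qed
      qed
    qed
    then show ?thesis using inj by (simp add: K_def)
  qed
  have "S r = (\<Union>n. S r \<inter> cball 0 (real n))"
  proof
    show "S r \<subseteq> (\<Union>n. S r \<inter> cball 0 (real n))"
    proof
      fix x assume "x \<in> S r"
      obtain n :: nat where "norm x \<le> real n" using real_arch_simple by blast
      with \<open>x \<in> S r\<close> show "x \<in> (\<Union>n. S r \<inter> cball 0 (real n))" by auto
    qed
  qed auto
  then have "negligible (S r)" using negn negligible_Union_nat by metis
  then show ?thesis by (simp add: S_def)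
qed

lemma level_negligible:
  fixes U :: "'a::euclidean_space set"
  assumes "U \<noteq> {}" and r: "r > 0"
  shows "negligible {x. infdist x U = r}"
proof -
  have "infdist x U = infdist x (closure U)" for x
    by (simp add: infdist_eq_setdist)
  then show ?thesis using level_negligible_closed[of "closure U" r] assms by simp
qed

lemma locsup_meas:
  fixes D :: "'a::euclidean_space set" and h :: "'a \<Rightarrow> real"
  assumes B: "\<And>y. y \<in> D \<Longrightarrow> \<bar>h y\<bar> \<le> B"
  shows "(\<lambda>x. locsup D h s x) \<in> borel_measurable lebesgue"
proof -
  have "(\<lambda>x. locsup D h s x) \<in> borel_measurable borel"
    unfolding borel_measurable_iff_greater
  proof
    fix a
    define O1 where "O1 = (\<Union>y\<in>{y\<in>D. a < h y}. ball y s)"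
    define C1 where "C1 = (\<Inter>y\<in>D. {x. s \<le> dist y x})"
    define C2 where "C2 = {x::'a. a < Sup ({}::real set)}"
    have eq: "{x \<in> space borel. a < locsup D h s x} = O1 \<union> (C1 \<inter> C2)"
    proof (intro set_eqI iffI)
      fix x assume x: "x \<in> {x \<in> space borel. a < locsup D h s x}"
      show "x \<in> O1 \<union> (C1 \<inter> C2)"
      proof (cases "ball x s \<inter> D = {}")
        case True
        then have "x \<in> C1" unfolding C1_def by (force simp: dist_commute not_less)
        moreover have "x \<in> C2" using x True by (simp add: C2_def locsup_def)
        ultimately show ?thesis by auto
      next
        case False
        have bdd: "bdd_above (h ` (ball x s \<inter> D))"
          using B by (intro bdd_aboveI2[where M=B]) (auto simp: abs_le_iff)
        from x have "a < Sup (h ` (ball x s \<inter> D))" by (simp add: locsup_def)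
        moreover have ne: "h ` (ball x s \<inter> D) \<noteq> {}" using False by simp
        ultimately have "\<exists>z \<in> h ` (ball x s \<inter> D). a < z" using less_cSup_iff[OF ne bdd] by blast
        then obtain y where "y \<in> ball x s \<inter> D" "a < h y" by blast
        then show ?thesis unfolding O1_def by (auto simp: dist_commute)
      qed
    next
      fix x assume x: "x \<in> O1 \<union> (C1 \<inter> C2)"
      show "x \<in> {x \<in> space borel. a < locsup D h s x}"
      proof (cases "ball x s \<inter> D = {}")
        case True
        then have "x \<notin> O1" unfolding O1_def by (force simp: dist_commute)
        then have "x \<in> C2" using x by auto
        then show ?thesis using True by (simp add: C2_def locsup_def split: if_splits)
      next
        case False
        have bdd: "bdd_above (h ` (ball x s \<inter> D))"
          using B by (intro bdd_aboveI2[where M=B]) (auto simp: abs_le_iff)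
        have "x \<notin> C1" using False unfolding C1_def by (force simp: dist_commute)
        then have "x \<in> O1" using x by auto
        then obtain y where "y \<in> ball x s \<inter> D" "a < h y"
          unfolding O1_def by (auto simp: dist_commute)
        moreover have ne: "h ` (ball x s \<inter> D) \<noteq> {}" using False by simp
        ultimately have "a < Sup (h ` (ball x s \<inter> D))"
          using less_cSup_iff[OF ne bdd] by blast
        then show ?thesis by (simp add: locsup_def)
      qed
    qed
    have "open O1" unfolding O1_def by auto
    moreover have "closed C1" unfolding C1_def
      by (intro closed_INT ballI closed_Collect_le continuous_intros)
    moreover have "C2 = {} \<or> C2 = UNIV" unfolding C2_def by auto
    ultimately show "{x \<in> space borel. a < locsup D h s x} \<in> sets borel"
      unfolding eq by auto
  qed
  then have "(\<lambda>x. locsup D h s x) \<in> borel_measurable lborel" by simp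
  then show ?thesis by (rule measurable_completion)
qed

lemma infdist_geI:
  assumes "A \<noteq> {}" "\<And>a. a \<in> A \<Longrightarrow> d \<le> dist x a"
  shows "d \<le> infdist x A"
  unfolding infdist_notempty[OF assms(1)] by (rule cINF_greatest) (use assms in auto)

definition Eset :: "'a::euclidean_space set \<Rightarrow> ('a \<Rightarrow> real) \<Rightarrow> real \<Rightarrow> 'a set" where
  "Eset D h r = (\<Union>q\<in>{q\<in>\<rat>. {y\<in>D. q < h y} \<noteq> {}}. {x. infdist x {y\<in>D. q < h y} = r})"

lemma Eset_negligible:
  assumes "r > 0"
  shows "negligible (Eset D h r)"
  unfolding Eset_def
proof (rule negligible_countable_Union)
  show "countable ((\<lambda>q. {x. infdist x {y\<in>D. q < h y} = r}) ` {q\<in>\<rat>. {y\<in>D. q < h y} \<noteq> {}})"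
    by (intro countable_image countable_subset[OF _ countable_rat]) auto
  show "negligible S" if "S \<in> (\<lambda>q. {x. infdist x {y\<in>D. q < h y} = r}) ` {q\<in>\<rat>. {y\<in>D. q < h y} \<noteq> {}}" for S
  proof -
    from that obtain q where q: "{y\<in>D. q < h y} \<noteq> {}" and S: "S = {x. infdist x {y\<in>D. q < h y} = r}"
      by auto
    show ?thesis unfolding S by (rule level_negligible[OF q assms])
  qed
qed

lemma locsup_cont:
  fixes D :: "'a::euclidean_space set" and h :: "'a \<Rightarrow> real"
  assumes B: "\<And>y. y \<in> D \<Longrightarrow> \<bar>h y\<bar> \<le> B" and r: "r > 0"
    and x: "x \<in> D" "x \<notin> Eset D h r"
  shows "isCont (\<lambda>s. locsup D h s x) r"
  unfolding continuous_at_eps_delta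
proof (intro allI impI)
  fix e :: real assume e: "e > 0"
  have bdd: "bdd_above (h ` (ball x s \<inter> D))" for s
    using B by (intro bdd_aboveI2[where M=B]) (auto simp: abs_le_iff)
  define M where "M = locsup D h r x"
  have "x \<in> ball x r \<inter> D" using x r by simp
  then have ne: "h ` (ball x r \<inter> D) \<noteq> {}" by blast
  have "M - e < Sup (h ` (ball x r \<inter> D))" using e by (simp add: M_def locsup_def)
  then have "\<exists>z \<in> h ` (ball x r \<inter> D). M - e < z" using less_cSup_iff[OF ne bdd] by blast
  then obtain y where y: "y \<in> ball x r \<inter> D" "M - e < h y" by blast
  define d1 where "d1 = r - dist x y"
  have d1: "d1 > 0" using y by (simp add: d1_def)
  obtain q where q: "q \<in> \<rat>" "M < q" "q < M + e" using Rats_dense_in_real[of M "M + e"] e by auto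
  define U where "U = {y\<in>D. q < h y}"
  have "\<exists>d2>0. \<forall>s z. s < r + d2 \<longrightarrow> z \<in> ball x s \<inter> D \<longrightarrow> h z \<le> q"
  proof (cases "U = {}")
    case True
    then show ?thesis by (intro exI[of _ 1]) (auto simp: U_def not_less)
  next
    case False
    have far: "r \<le> dist x z" if "z \<in> U" for z
    proof (rule ccontr)
      assume "\<not> r \<le> dist x z"
      then have "z \<in> ball x r \<inter> D" using that by (auto simp: U_def)
      then have "h z \<le> M" unfolding M_def locsup_def by (rule cSUP_upper[OF _ bdd])
      then show False using that q by (auto simp: U_def)
    qed
    have "r \<le> infdist x U" by (rule infdist_geI[OF False far])
    moreover have "infdist x U \<noteq> r"
      using x(2) False q(1) unfolding Eset_def U_def by auto
    ultimately have gt: "infdist x U > r" by simp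
    show ?thesis
    proof (intro exI conjI allI impI)
      show "infdist x U - r > 0" using gt by simp
      fix s z assume s: "s < r + (infdist x U - r)" and z: "z \<in> ball x s \<inter> D"
      show "h z \<le> q"
      proof (rule ccontr)
        assume "\<not> h z \<le> q"
        then have "z \<in> U" using z by (simp add: U_def)
        then have "infdist x U \<le> dist x z" by (rule infdist_le)
        then show False using z s by simp
      qed
    qed
  qed
  then obtain d2 where d2: "d2 > 0" "\<And>s z. s < r + d2 \<Longrightarrow> z \<in> ball x s \<inter> D \<Longrightarrow> h z \<le> q" by blast
  show "\<exists>d>0. \<forall>s. dist s r < d \<longrightarrow> dist (locsup D h s x) (locsup D h r x) < e"
  proof (intro exI conjI allI impI)
    show "min d1 d2 > 0" using d1 d2 by simp
    fix s assume "dist s r < min d1 d2"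
    then have s1: "r - d1 < s" and s2: "s < r + d2" by (auto simp: dist_real_def)
    have ys: "y \<in> ball x s \<inter> D" using y s1 by (simp add: d1_def)
    have "h y \<le> locsup D h s x" unfolding locsup_def by (rule cSUP_upper[OF ys bdd])
    moreover have "locsup D h s x \<le> q" unfolding locsup_def
      using ys by (intro cSUP_least) (auto intro: d2(2)[OF s2])
    ultimately show "dist (locsup D h s x) (locsup D h r x) < e"
      using y q by (simp add: dist_real_def M_def abs_less_iff)
  qed
qed

lemma cont_int:
  fixes g :: "real \<Rightarrow> 'a::euclidean_space \<Rightarrow> real"
  assumes c: "c > 0" and D: "D \<in> sets lebesgue" "emeasure lebesgue D < \<infinity>"
    and meas: "\<And>s. g s \<in> borel_measurable lebesgue"
    and bnd: "\<And>s x. x \<in> D \<Longrightarrow> \<bar>g s x\<bar> \<le> K"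
    and E: "negligible E" and cont: "\<And>x. x \<in> D \<Longrightarrow> x \<notin> E \<Longrightarrow> isCont (\<lambda>s. g s x) r"
  shows "continuous (at r) (\<lambda>s. LINT x:D|mu c. g s x)"
proof -
  have sets: "sets (mu c :: 'a measure) = sets lebesgue" by (simp add: mu_def)
  have bm: "borel_measurable (mu c :: 'a measure) = borel_measurable lebesgue"
    by (rule measurable_cong_sets[OF sets refl])
  have measM: "(\<lambda>x. indicator D x *\<^sub>R g s x) \<in> borel_measurable (mu c)" for s
    unfolding bm using meas[of s] D(1) by measurable
  have "emeasure (mu c) D = ennreal c * emeasure lebesgue D" by (simp add: mu_def)
  also have "\<dots> < \<infinity>" using D(2) by (simp add: ennreal_mult_less_top)
  finally have finD: "emeasure (mu c) D < \<infinity>" .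
  have Dsets: "D \<in> sets (mu c)" using D(1) sets by simp
  have intw: "integrable (mu c) (\<lambda>x. indicator D x * K)"
    by (intro integrable_mult_left integrable_real_indicator Dsets finD)
  have "E \<in> null_sets lebesgue" using E by (simp add: negligible_iff_null_sets)
  then have "E \<in> null_sets (mu c)"
    by (simp add: mu_def null_sets_def)
  then have AE: "AE x in mu c. x \<notin> E" by (rule AE_not_in)
  show ?thesis
    unfolding continuous_at_sequentially
  proof (intro allI impI)
    fix \<sigma> :: "nat \<Rightarrow> real" assume \<sigma>: "\<sigma> \<longlonglongrightarrow> r"
    have "(\<lambda>i. integral\<^sup>L (mu c) (\<lambda>x. indicator D x *\<^sub>R g (\<sigma> i) x))
           \<longlonglongrightarrow> integral\<^sup>L (mu c) (\<lambda>x. indicator D x *\<^sub>R g r x)"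
    proof (rule integral_dominated_convergence[OF measM measM intw])
      show "AE x in mu c. (\<lambda>i. indicator D x *\<^sub>R g (\<sigma> i) x) \<longlonglongrightarrow> indicator D x *\<^sub>R g r x"
        using AE
      proof eventually_elim
        fix x assume xE: "x \<notin> E"
        show "(\<lambda>i. indicator D x *\<^sub>R g (\<sigma> i) x) \<longlonglongrightarrow> indicator D x *\<^sub>R g r x"
        proof (cases "x \<in> D")
          case True
          have "(\<lambda>i. g (\<sigma> i) x) \<longlonglongrightarrow> g r x"
            by (rule isCont_tendsto_compose[OF cont[OF True xE] \<sigma>])
          then show ?thesis using True by simp
        qed simp
      qed
      show "AE x in mu c. norm (indicator D x *\<^sub>R g (\<sigma> i) x) \<le> indicator D x * K" for i
        using bnd by (intro AE_I2) (auto simp: indicator_def)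
    qed
    then show "((\<lambda>s. LINT x:D|mu c. g s x) \<circ> \<sigma>) \<longlonglongrightarrow> (LINT x:D|mu c. g r x)"
      by (simp add: set_lebesgue_integral_def comp_def)
  qed
qed

lemma convex_sets_lebesgue:
  fixes S :: "'a::euclidean_space set"
  assumes "convex S"
  shows "S \<in> sets lebesgue"
proof -
  have "interior S \<in> sets borel" by (intro borel_open open_interior)
  then have i: "interior S \<in> sets lebesgue" by (simp add: sets_completionI_sets)
  have "negligible (S - interior S)"
    by (rule negligible_subset[OF negligible_convex_frontier[OF assms]])
       (auto simp: frontier_def dest: closure_subset[THEN subsetD])
  then have n: "S - interior S \<in> sets lebesgue" by (rule negligible_imp_sets)
  have "S = interior S \<union> (S - interior S)" using interior_subset by blast
  then show ?thesis using i n by (metis sets.Un)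
qed

lemma locinf_eq: "locinf D f s x = - locsup D (\<lambda>y. - f y) s x"
  by (simp add: locinf_def locsup_def Inf_real_def image_image)

theorem proposition3:
  fixes D :: "'a::euclidean_space set" and f :: "'a \<Rightarrow> real" and c :: real
  assumes "c > 0"
    and "D \<in> sets lebesgue"
    and "emeasure lebesgue (convex hull D) < \<infinity>"
    and "bounded (f ` D)"
    and "r > 0"
  shows "continuous (at r) (\<lambda>s. LINT x:D|mu c. locsup D f s x) \<and>
         continuous (at r) (\<lambda>s. LINT x:D|mu c. locinf D f s x) \<and>
         continuous (at r) (\<lambda>s. LINT x:D|mu c. osc D f s x)"
proof -
  note c = assms(1) and Dm = assms(2) and r = assms(5)
  obtain B where B: "\<And>y. y \<in> D \<Longrightarrow> \<bar>f y\<bar> \<le> B"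
    using assms(4) unfolding bounded_iff by auto
  have Bn: "\<And>y. y \<in> D \<Longrightarrow> \<bar>- f y\<bar> \<le> B" using B by simp
  have "emeasure lebesgue D \<le> emeasure lebesgue (convex hull D)"
    by (intro emeasure_mono hull_subset convex_sets_lebesgue convex_convex_hull)
  then have Dfin: "emeasure lebesgue D < \<infinity>" using assms(3) by (rule le_less_trans)
  define K where "K = \<bar>B\<bar> + \<bar>Sup ({}::real set)\<bar>"
  have bnd: "\<bar>locsup D h s x\<bar> \<le> K" if h: "\<And>y. y \<in> D \<Longrightarrow> \<bar>h y\<bar> \<le> B" and x: "x \<in> D"
    for h :: "'a \<Rightarrow> real" and s x
  proof (cases "ball x s \<inter> D = {}")
    case True
    then show ?thesis by (simp add: locsup_def K_def)
  next
    case False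
    have bdd: "bdd_above (h ` (ball x s \<inter> D))"
      using h by (intro bdd_aboveI2[where M=B]) (auto simp: abs_le_iff)
    obtain y where y: "y \<in> ball x s \<inter> D" using False by blast
    have "h y \<le> locsup D h s x" unfolding locsup_def by (rule cSUP_upper[OF y bdd])
    moreover have "locsup D h s x \<le> B" unfolding locsup_def
      using False h by (intro cSUP_least) (auto simp: abs_le_iff)
    moreover have "- B \<le> h y" using h[of y] y by (simp add: abs_le_iff)
    ultimately show ?thesis unfolding K_def abs_le_iff
      using abs_ge_zero[of "Sup ({}::real set)"] abs_ge_self[of B] by linarith
  qed
  define E where "E = Eset D f r \<union> Eset D (\<lambda>y. - f y) r"
  have E: "negligible E" unfolding E_def by (intro negligible_Un Eset_negligible[OF r])
  have c1: "isCont (\<lambda>s. locsup D f s x) r" if "x \<in> D" "x \<notin> E" for x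
    using locsup_cont[where D=D and h=f and B=B, OF B r] that by (auto simp: E_def)
  have c2: "isCont (\<lambda>s. locsup D (\<lambda>y. - f y) s x) r" if "x \<in> D" "x \<notin> E" for x
    using locsup_cont[where D=D and h="\<lambda>y. - f y" and B=B, OF Bn r] that by (auto simp: E_def)
  have m1: "locsup D f s \<in> borel_measurable lebesgue" for s
    using locsup_meas[where D=D and h=f and B=B and s=s, OF B] by simp
  have m2: "locsup D (\<lambda>y. - f y) s \<in> borel_measurable lebesgue" for s
    using locsup_meas[where D=D and h="\<lambda>y. - f y" and B=B and s=s, OF Bn] by simp
  have G1: "continuous (at r) (\<lambda>s. LINT x:D|mu c. locsup D f s x)"
    by (rule cont_int[OF c Dm Dfin m1 bnd[OF B] E c1])
  have G2: "continuous (at r) (\<lambda>s. LINT x:D|mu c. locinf D f s x)"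
  proof (rule cont_int[OF c Dm Dfin _ _ E])
    show "locinf D f s \<in> borel_measurable lebesgue" for s
      unfolding locinf_eq using m2[of s] by measurable
    show "\<bar>locinf D f s x\<bar> \<le> K" if "x \<in> D" for s x
      unfolding locinf_eq using bnd[OF Bn that] by simp
    show "isCont (\<lambda>s. locinf D f s x) r" if "x \<in> D" "x \<notin> E" for x
      unfolding locinf_eq using c2[OF that] by (intro continuous_intros)
  qed
  have G3: "continuous (at r) (\<lambda>s. LINT x:D|mu c. osc D f s x)"
  proof (rule cont_int[OF c Dm Dfin _ _ E, where K = "2 * K"])
    show "osc D f s \<in> borel_measurable lebesgue" for s
      unfolding osc_def locinf_eq using m1[of s] m2[of s] by measurable
    show "\<bar>osc D f s x\<bar> \<le> 2 * K" if "x \<in> D" for s x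
    proof -
      have "\<bar>locsup D f s x\<bar> \<le> K" by (rule bnd[OF B that])
      moreover have "\<bar>locsup D (\<lambda>y. - f y) s x\<bar> \<le> K" by (rule bnd[OF Bn that])
      ultimately show ?thesis unfolding osc_def locinf_eq by (simp add: abs_le_iff)
    qed
    show "isCont (\<lambda>s. osc D f s x) r" if "x \<in> D" "x \<notin> E" for x
      unfolding osc_def locinf_eq using c1[OF that] c2[OF that] by (intro continuous_intros)
  qed
  show ?thesis using G1 G2 G3 by blast
qed

end
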